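(* On the open set $\Omega\subset\mathbb{R}^3$ where $u,v,w$ are pairwise distinct, consider the system $$u'=\frac{1}{u-v}+\frac{1}{u-w},\quad v'=\frac{1}{v-w}+\frac{1}{v-u},\quad w'=\frac{1}{w-u}+\frac{1}{w-v},$$ written $\mathbf{u}'=\mathbf{U}(\mathbf{u})$ with $\mathbf{u}=(u,v,w)$. Define $$P_{f1}(\mathbf{u})=\frac{-1}{\sqrt6\,(u-v)(v-w)(w-u)}\begin{pmatrix}0&1&-1\\-1&0&1\\1&-1&0\end{pmatrix},\qquad H_f(\mathbf{u})=\frac{1}{6\sqrt6}(u+v-2w)\big[(u+v-2w)^2-9(u-v)^2\big],$$ $$P_{f2}(\mathbf{u})=\frac16\Big[\frac{u-v}{(v-w)(w-u)}+\frac{2}{u-v}\Big]\begin{pmatrix}0&2&1\\-2&0&-1\\-1&1&0\end{pmatrix}+\frac12\Big[\frac1{v-w}-\frac1{w-u}\Big]\begin{pmatrix}0&0&1\\0&0&1\\-1&-1&0\end{pmatrix},$$ and $H^{(1)}(\mathbf{u})=u+v+w$. Then $P_{f1}$ and $P_{f2}$ are compatible Poisson matrices on $\Omega$, and the system is bi-Hamiltonian: $$\mathbf{u}'=P_{f1}(\mathbf{u})\nabla H_f(\mathbf{u})=P_{f2}(\mathbf{u})\nabla H^{(1)}(\mathbf{u}).$$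
   Context: A smooth skew-symmetric matrix-valued function $P$ on an open subset of $\mathbb{R}^3$ is a Poisson matrix if the bracket $\{f,g\}=(\nabla f)^{T}P\,\nabla g$ satisfies the Jacobi identity; two Poisson matrices are compatible if every linear combination of them is again a Poisson matrix. *)

theory Defs
  imports "HOL-Analysis.Analysis"
begin

type_synonym pt = "real ^ 3"
type_synonym mat3 = "real ^ 3 ^ 3"

definition partial :: "3 \<Rightarrow> (pt \<Rightarrow> real) \<Rightarrow> pt \<Rightarrow> real" where
  "partial i f x = deriv (\<lambda>t. f (x + t *\<^sub>R axis i 1)) 0"

definition grad :: "(pt \<Rightarrow> real) \<Rightarrow> pt \<Rightarrow> pt" where
  "grad f x = (\<chi> i. partial i f x)"

fun iterpartial :: "3 list \<Rightarrow> (pt \<Rightarrow> real) \<Rightarrow> pt \<Rightarrow> real" where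
  "iterpartial [] f = f"
| "iterpartial (i # is) f = partial i (iterpartial is f)"

definition smooth_on :: "pt set \<Rightarrow> (pt \<Rightarrow> real) \<Rightarrow> bool" where
  "smooth_on S f \<longleftrightarrow> (\<forall>is. iterpartial is f differentiable_on S \<and> continuous_on S (iterpartial is f))"

definition pbracket :: "(pt \<Rightarrow> mat3) \<Rightarrow> (pt \<Rightarrow> real) \<Rightarrow> (pt \<Rightarrow> real) \<Rightarrow> pt \<Rightarrow> real" where
  "pbracket P f g x = grad f x \<bullet> (P x *v grad g x)"

definition poisson_matrix_on :: "pt set \<Rightarrow> (pt \<Rightarrow> mat3) \<Rightarrow> bool" where
  "poisson_matrix_on S P \<longleftrightarrow>
     (\<forall>i j. smooth_on S (\<lambda>x. P x $ i $ j)) \<and>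
     (\<forall>x\<in>S. transpose (P x) = - P x) \<and>
     (\<forall>f g h. smooth_on S f \<and> smooth_on S g \<and> smooth_on S h \<longrightarrow>
        (\<forall>x\<in>S. pbracket P f (pbracket P g h) x + pbracket P g (pbracket P h f) x
                 + pbracket P h (pbracket P f g) x = 0))"

definition compatible_on :: "pt set \<Rightarrow> (pt \<Rightarrow> mat3) \<Rightarrow> (pt \<Rightarrow> mat3) \<Rightarrow> bool" where
  "compatible_on S P Q \<longleftrightarrow> (\<forall>a b::real. poisson_matrix_on S (\<lambda>x. a *\<^sub>R P x + b *\<^sub>R Q x))"

definition Omega :: "pt set" where
  "Omega = {x. x$1 \<noteq> x$2 \<and> x$2 \<noteq> x$3 \<and> x$3 \<noteq> x$1}"

definition Ufield :: "pt \<Rightarrow> pt" where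
  "Ufield x = (let u = x$1; v = x$2; w = x$3 in
     vector [1/(u-v) + 1/(u-w), 1/(v-w) + 1/(v-u), 1/(w-u) + 1/(w-v)])"

definition Pf1 :: "pt \<Rightarrow> mat3" where
  "Pf1 x = (let u = x$1; v = x$2; w = x$3 in
     (-1 / (sqrt 6 * (u-v) * (v-w) * (w-u))) *\<^sub>R
       vector [vector [0,1,-1], vector [-1,0,1], vector [1,-1,0]])"

definition Hf :: "pt \<Rightarrow> real" where
  "Hf x = (let u = x$1; v = x$2; w = x$3 in
     1 / (6 * sqrt 6) * (u + v - 2*w) * ((u + v - 2*w)^2 - 9*(u-v)^2))"

definition Pf2 :: "pt \<Rightarrow> mat3" where
  "Pf2 x = (let u = x$1; v = x$2; w = x$3 in
     (1/6 * ((u-v)/((v-w)*(w-u)) + 2/(u-v))) *\<^sub>R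
       vector [vector [0,2,1], vector [-2,0,-1], vector [-1,1,0]]
   + (1/2 * (1/(v-w) - 1/(w-u))) *\<^sub>R
       vector [vector [0,0,1], vector [0,0,1], vector [-1,-1,0]])"

definition H1 :: "pt \<Rightarrow> real" where
  "H1 x = x$1 + x$2 + x$3"

end

theory Submission
  imports Defs
begin


lemma L1:
  fixes f :: "pt \<Rightarrow> real"
  assumes "(f has_derivative D) (at (y + s0 *\<^sub>R e))"
  shows "((\<lambda>s. f (y + s *\<^sub>R e)) has_real_derivative D e) (at s0)"
proof -
  have 1: "((\<lambda>s. y + s *\<^sub>R e) has_derivative (\<lambda>s. s *\<^sub>R e)) (at s0)"
    by (auto intro!: derivative_eq_intros)
  have "((\<lambda>s. f (y + s *\<^sub>R e)) has_derivative (\<lambda>s. D (s *\<^sub>R e))) (at s0)"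
    using has_derivative_compose[OF 1 assms] by simp
  moreover have "linear D" using assms has_derivative_linear by blast
  moreover have "(\<lambda>s. s * D e) = (*) (D e)" by (auto simp: mult.commute)
  ultimately show ?thesis unfolding has_field_derivative_def
    by (simp add: linear_cmul)
qed

lemma L2:
  assumes "(f has_derivative D) (at z)"
  shows "partial i f z = D (axis i 1)"
proof -
  have "((\<lambda>s. f (z + s *\<^sub>R axis i 1)) has_real_derivative D (axis i 1)) (at 0)"
    using L1[of f D z 0] assms by simp
  then show ?thesis unfolding partial_def by (rule DERIV_imp_deriv)
qed

lemma L3:
  assumes "f differentiable (at (y + s0 *\<^sub>R axis i 1))"
  shows "((\<lambda>s. f (y + s *\<^sub>R axis i 1)) has_real_derivative partial i f (y + s0 *\<^sub>R axis i 1)) (at s0)"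
proof -
  obtain D where D: "(f has_derivative D) (at (y + s0 *\<^sub>R axis i 1))"
    using assms differentiable_def by blast
  show ?thesis using L1[OF D] L2[OF D] by simp
qed


definition dbr :: "(3\<Rightarrow>real) \<Rightarrow> (3\<Rightarrow>3\<Rightarrow>real) \<Rightarrow> (3\<Rightarrow>real) \<Rightarrow> (3\<Rightarrow>3\<Rightarrow>real) \<Rightarrow> (3\<Rightarrow>3\<Rightarrow>real) \<Rightarrow> (3\<Rightarrow>3\<Rightarrow>3\<Rightarrow>real) \<Rightarrow> 3 \<Rightarrow> real" where
  "dbr G G2 H H2 Pm dP k = (\<Sum>i\<in>UNIV. \<Sum>j\<in>UNIV. G2 k i * Pm i j * H j + G i * dP k i j * H j + G i * Pm i j * H2 k j)"
definition br :: "(3\<Rightarrow>real) \<Rightarrow> (3\<Rightarrow>3\<Rightarrow>real) \<Rightarrow> (3\<Rightarrow>real) \<Rightarrow> real" where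
  "br F Pm V = (\<Sum>l\<in>UNIV. F l * (\<Sum>k\<in>UNIV. Pm l k * V k))"
definition Jc :: "(3\<Rightarrow>3\<Rightarrow>real) \<Rightarrow> (3\<Rightarrow>3\<Rightarrow>3\<Rightarrow>real) \<Rightarrow> real" where
  "Jc Pm dP = Pm 2 3*(dP 2 1 2 + dP 3 1 3) - Pm 1 3*(dP 3 2 3 - dP 1 1 2) - Pm 1 2*(dP 1 1 3 + dP 2 2 3)"

lemma jac_alg:
  assumes P: "\<And>i j. Pm j i = - Pm i j" and dP: "\<And>k i j. dP k j i = - dP k i j"
    and F2: "\<And>i j. F2 j i = F2 i j" and G2: "\<And>i j. G2 j i = G2 i j" and H2: "\<And>i j. H2 j i = H2 i j"
  shows "br F Pm (dbr G G2 H H2 Pm dP) + br G Pm (dbr H H2 F F2 Pm dP) + br H Pm (dbr F F2 G G2 Pm dP)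
    = - (F 1 * (G 2 * H 3 - G 3 * H 2) - F 2 * (G 1 * H 3 - G 3 * H 1) + F 3 * (G 1 * H 2 - G 2 * H 1)) * Jc Pm dP"
proof -
  have d: "Pm i i = 0" "dP k i i = 0" for i k using P[of i i] dP[of k i i] by auto
  note s = d P[of 1 2] P[of 1 3] P[of 2 3] dP[of _ 1 2] dP[of _ 1 3] dP[of _ 2 3]
     F2[of 1 2] F2[of 1 3] F2[of 2 3] G2[of 1 2] G2[of 1 3] G2[of 2 3] H2[of 1 2] H2[of 1 3] H2[of 2 3]
  show ?thesis unfolding br_def dbr_def Jc_def sum_3 s
    by (simp add: algebra_simps)
qed


lemma pb_eq: "pbracket P g h = (\<lambda>y. \<Sum>i\<in>UNIV. \<Sum>j\<in>UNIV. partial i g y * (P y $ i $ j * partial j h y))"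
  by (auto simp: pbracket_def grad_def inner_vec_def matrix_vector_mult_def sum_distrib_left)

lemma pb_partial:
  assumes g: "\<And>i. partial i g differentiable (at x)" and h: "\<And>i. partial i h differentiable (at x)"
    and P: "\<And>i j. (\<lambda>y. P y $ i $ j) differentiable (at x)"
  shows "partial k (pbracket P g h) x = dbr (\<lambda>i. partial i g x) (\<lambda>k i. partial k (partial i g) x)
     (\<lambda>i. partial i h x) (\<lambda>k j. partial k (partial j h) x) (\<lambda>i j. P x$i$j) (\<lambda>k i j. partial k (\<lambda>y. P y$i$j) x) k"
proof -
  define Dg where "Dg i = frechet_derivative (partial i g) (at x)" for i
  define Dh where "Dh i = frechet_derivative (partial i h) (at x)" for i
  define DP where "DP i j = frechet_derivative (\<lambda>y. P y $ i $ j) (at x)" for i j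
  have dg: "(partial i g has_derivative Dg i) (at x)" for i
    unfolding Dg_def using g[of i] frechet_derivative_works by blast
  have dh: "(partial i h has_derivative Dh i) (at x)" for i
    unfolding Dh_def using h[of i] frechet_derivative_works by blast
  have dP: "((\<lambda>y. P y $ i $ j) has_derivative DP i j) (at x)" for i j
    unfolding DP_def using P[of i j] frechet_derivative_works by blast
  have H: "((\<lambda>y. \<Sum>i\<in>UNIV. \<Sum>j\<in>UNIV. partial i g y * (P y $ i $ j * partial j h y)) has_derivative
     (\<lambda>v. \<Sum>i\<in>UNIV. \<Sum>j\<in>UNIV. partial i g x * (P x $ i $ j * Dh j v + DP i j v * partial j h x) + Dg i v * (P x $ i $ j * partial j h x))) (at x)"
    by (intro has_derivative_sum has_derivative_mult dg dh dP)
  have e: "Dg i (axis k 1) = partial k (partial i g) x" "Dh i (axis k 1) = partial k (partial i h) x"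
     "DP i j (axis k 1) = partial k (\<lambda>y. P y $ i $ j) x" for i j
    using L2[OF dg] L2[OF dh] L2[OF dP] by auto
  show ?thesis unfolding pb_eq L2[OF H] e dbr_def
    by (intro sum.cong refl) (simp add: algebra_simps)
qed


lemma mvt2d:
  fixes f :: "pt \<Rightarrow> real"
  assumes h: "0 < h"
   and df: "\<And>s t. 0 \<le> s \<Longrightarrow> s \<le> h \<Longrightarrow> 0 \<le> t \<Longrightarrow> t \<le> h \<Longrightarrow> f differentiable (at (x + s *\<^sub>R axis i 1 + t *\<^sub>R axis j 1))"
   and dfi: "\<And>s t. 0 \<le> s \<Longrightarrow> s \<le> h \<Longrightarrow> 0 \<le> t \<Longrightarrow> t \<le> h \<Longrightarrow> partial i f differentiable (at (x + s *\<^sub>R axis i 1 + t *\<^sub>R axis j 1))"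
  shows "\<exists>\<xi> \<eta>. 0 < \<xi> \<and> \<xi> < h \<and> 0 < \<eta> \<and> \<eta> < h \<and>
    f (x + h *\<^sub>R axis i 1 + h *\<^sub>R axis j 1) - f (x + h *\<^sub>R axis i 1) - f (x + h *\<^sub>R axis j 1) + f x
     = h * h * partial j (partial i f) (x + \<xi> *\<^sub>R axis i 1 + \<eta> *\<^sub>R axis j 1)"
proof -
  define e where "e = axis i (1::real)"
  define d where "d = axis j (1::real)"
  define g where "g s = f ((x + h *\<^sub>R d) + s *\<^sub>R e) - f (x + s *\<^sub>R e)" for s
  define g' where "g' s = partial i f ((x + h *\<^sub>R d) + s *\<^sub>R e) - partial i f (x + s *\<^sub>R e)" for s
  have "DERIV g s :> g' s" if "0 \<le> s" "s \<le> h" for s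
  proof -
    have 1: "f differentiable (at ((x + h *\<^sub>R d) + s *\<^sub>R e))"
      using df[of s h] that h unfolding e_def d_def by (simp add: algebra_simps)
    have 2: "f differentiable (at (x + s *\<^sub>R e))"
      using df[of s 0] that h unfolding e_def d_def by simp
    show ?thesis unfolding g_def g'_def e_def
      by (intro DERIV_diff L3) (use 1 2 in \<open>auto simp: e_def\<close>)
  qed
  then obtain \<xi> where xi: "0 < \<xi>" "\<xi> < h" "g h - g 0 = (h - 0) * g' \<xi>"
    using MVT2[of 0 h g g'] h by auto
  define k where "k t = partial i f ((x + \<xi> *\<^sub>R e) + t *\<^sub>R d)" for t
  have "DERIV k t :> partial j (partial i f) ((x + \<xi> *\<^sub>R e) + t *\<^sub>R d)" if "0 \<le> t" "t \<le> h" for t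
    unfolding k_def d_def
    by (rule L3) (use dfi[of \<xi> t] that xi in \<open>auto simp: e_def\<close>)
  then obtain \<eta> where eta: "0 < \<eta>" "\<eta> < h" "k h - k 0 = (h - 0) * partial j (partial i f) ((x + \<xi> *\<^sub>R e) + \<eta> *\<^sub>R d)"
    using MVT2[of 0 h k "\<lambda>t. partial j (partial i f) ((x + \<xi> *\<^sub>R e) + t *\<^sub>R d)"] h by auto
  have "g' \<xi> = k h - k 0" unfolding g'_def k_def by (simp add: algebra_simps)
  moreover have "g h - g 0 = f (x + h *\<^sub>R e + h *\<^sub>R d) - f (x + h *\<^sub>R e) - f (x + h *\<^sub>R d) + f x"
    unfolding g_def by (simp add: algebra_simps)
  ultimately show ?thesis using xi eta unfolding e_def d_def
    by (intro exI[of _ \<xi>] exI[of _ \<eta>]) auto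
qed

lemma norm_sq: "norm (s *\<^sub>R axis i (1::real) + t *\<^sub>R axis j 1 :: pt) \<le> \<bar>s\<bar> + \<bar>t\<bar>"
  using norm_triangle_ineq[of "s *\<^sub>R axis i (1::real)" "t *\<^sub>R axis j (1::real)"] by simp

lemma clairaut:
  fixes f :: "pt \<Rightarrow> real"
  assumes S: "open S" "x \<in> S"
   and f: "f differentiable_on S"
   and fi: "partial i f differentiable_on S" and fj: "partial j f differentiable_on S"
   and ci: "continuous_on S (partial j (partial i f))" and cj: "continuous_on S (partial i (partial j f))"
  shows "partial j (partial i f) x = partial i (partial j f) x"
proof (rule ccontr)
  let ?A = "partial j (partial i f)" and ?B = "partial i (partial j f)"
  assume ne: "?A x \<noteq> ?B x"
  define \<epsilon> where "\<epsilon> = \<bar>?A x - ?B x\<bar> / 2"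
  have ep: "\<epsilon> > 0" using ne by (simp add: \<epsilon>_def)
  have cA: "isCont ?A x" and cB: "isCont ?B x"
    using ci cj S continuous_on_eq_continuous_at by blast+
  obtain \<delta>1 where d1: "\<delta>1 > 0" "\<And>y. dist y x < \<delta>1 \<Longrightarrow> dist (?A y) (?A x) < \<epsilon>"
    using cA ep unfolding continuous_at_eps_delta by blast
  obtain \<delta>2 where d2: "\<delta>2 > 0" "\<And>y. dist y x < \<delta>2 \<Longrightarrow> dist (?B y) (?B x) < \<epsilon>"
    using cB ep unfolding continuous_at_eps_delta by blast
  obtain r where r: "r > 0" "ball x r \<subseteq> S" using S open_contains_ball by blast
  define h where "h = min r (min \<delta>1 \<delta>2) / 3"
  have h: "h > 0" "2 * h < r" "2 * h < \<delta>1" "2 * h < \<delta>2" using r d1 d2 by (auto simp: h_def)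
  have near: "dist (x + s *\<^sub>R axis a 1 + t *\<^sub>R axis b 1) x \<le> 2 * h"
    if "0 \<le> s" "s \<le> h" "0 \<le> t" "t \<le> h" for s t a b
    using norm_sq[of s a t b] that by (simp add: dist_norm)
  have inS: "x + s *\<^sub>R axis a 1 + t *\<^sub>R axis b 1 \<in> S"
    if "0 \<le> s" "s \<le> h" "0 \<le> t" "t \<le> h" for s t a b
    using near[OF that, of a b] h r by (auto simp: dist_commute)
  have dat: "F differentiable (at y)" if "F differentiable_on S" "y \<in> S" for F y
    using that S differentiable_on_eq_differentiable_at by blast
  obtain \<xi> \<eta> where 1: "0 < \<xi>" "\<xi> < h" "0 < \<eta>" "\<eta> < h"
    "f (x + h *\<^sub>R axis i 1 + h *\<^sub>R axis j 1) - f (x + h *\<^sub>R axis i 1) - f (x + h *\<^sub>R axis j 1) + f x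
     = h * h * ?A (x + \<xi> *\<^sub>R axis i 1 + \<eta> *\<^sub>R axis j 1)"
    using mvt2d[of h f x i j] h dat[OF f] dat[OF fi] inS by blast
  obtain \<xi>' \<eta>' where 2: "0 < \<xi>'" "\<xi>' < h" "0 < \<eta>'" "\<eta>' < h"
    "f (x + h *\<^sub>R axis j 1 + h *\<^sub>R axis i 1) - f (x + h *\<^sub>R axis j 1) - f (x + h *\<^sub>R axis i 1) + f x
     = h * h * ?B (x + \<xi>' *\<^sub>R axis j 1 + \<eta>' *\<^sub>R axis i 1)"
    using mvt2d[of h f x j i] h dat[OF f] dat[OF fj] inS by blast
  have "x + h *\<^sub>R axis j 1 + h *\<^sub>R axis i 1 = x + h *\<^sub>R axis i 1 + h *\<^sub>R axis j 1"
    by (simp add: algebra_simps)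
  then have eq: "?A (x + \<xi> *\<^sub>R axis i 1 + \<eta> *\<^sub>R axis j 1) = ?B (x + \<xi>' *\<^sub>R axis j 1 + \<eta>' *\<^sub>R axis i 1)"
    using 1(5) 2(5) h by (auto simp: algebra_simps)
  have "dist (?A (x + \<xi> *\<^sub>R axis i 1 + \<eta> *\<^sub>R axis j 1)) (?A x) < \<epsilon>"
    using d1(2) near[of \<xi> \<eta> i j] 1 h by force
  moreover have "dist (?B (x + \<xi>' *\<^sub>R axis j 1 + \<eta>' *\<^sub>R axis i 1)) (?B x) < \<epsilon>"
    using d2(2) near[of \<xi>' \<eta>' j i] 2 h by force
  moreover have "\<And>a b A B::real. \<bar>a - A\<bar> < \<bar>A - B\<bar> / 2 \<Longrightarrow> \<bar>b - B\<bar> < \<bar>A - B\<bar> / 2 \<Longrightarrow> a = b \<Longrightarrow> False"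
    by (auto simp: abs_real_def split: if_splits)
  ultimately show False using eq unfolding \<epsilon>_def dist_real_def by blast
qed


definition JcP :: "(pt \<Rightarrow> mat3) \<Rightarrow> pt \<Rightarrow> real" where
  "JcP P x = Jc (\<lambda>i j. P x$i$j) (\<lambda>k i j. partial k (\<lambda>y. P y$i$j) x)"

lemma smooth_facts:
  assumes "smooth_on S f" "open S" "x \<in> S"
  shows "f differentiable (at x)" "partial i f differentiable (at x)"
    "f differentiable_on S" "partial i f differentiable_on S" "continuous_on S (partial j (partial i f))"
proof -
  have a: "iterpartial is f differentiable_on S" "continuous_on S (iterpartial is f)" for "is"
    using assms(1) unfolding smooth_on_def by auto
  show "f differentiable_on S" "partial i f differentiable_on S" "continuous_on S (partial j (partial i f))"
    using a[of "[]"] a[of "[i]"] a[of "[j,i]"] by auto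
  then show "f differentiable (at x)" "partial i f differentiable (at x)"
    using assms(2,3) differentiable_on_eq_differentiable_at by blast+
qed

lemma partial_local:
  assumes "open S" "x \<in> S" "\<And>y. y \<in> S \<Longrightarrow> F y = G y" "G differentiable (at x)"
  shows "partial k F x = partial k G x"
proof -
  obtain D where D: "(G has_derivative D) (at x)" using assms(4) differentiable_def by blast
  have "(F has_derivative D) (at x)"
    by (rule has_derivative_transform_within_open[OF D assms(1,2)]) (use assms(3) in auto)
  then show ?thesis using L2 D by metis
qed

lemma partial_uminus:
  assumes "G differentiable (at x)"
  shows "partial k (\<lambda>y. - G y) x = - partial k G x"
proof -
  obtain D where D: "(G has_derivative D) (at x)" using assms differentiable_def by blast
  have "((\<lambda>y. - G y) has_derivative (\<lambda>v. - D v)) (at x)" using D by (rule has_derivative_minus)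
  then show ?thesis using L2 D by metis
qed

lemma poisson_crit:
  assumes S: "open S" and sm: "\<forall>i j. smooth_on S (\<lambda>x. P x $ i $ j)"
    and sk: "\<forall>x\<in>S. transpose (P x) = - P x" and J: "\<forall>x\<in>S. JcP P x = 0"
  shows "poisson_matrix_on S P"
  unfolding poisson_matrix_on_def
proof (intro conjI allI impI ballI)
  show "smooth_on S (\<lambda>x. P x $ i $ j)" for i j using sm by auto
  show "transpose (P x) = - P x" if "x \<in> S" for x using sk that by auto
  fix f g h x assume fgh: "smooth_on S f \<and> smooth_on S g \<and> smooth_on S h" and x: "x \<in> S"
  have skP: "P y $ j $ i = - P y $ i $ j" if "y \<in> S" for y i j
  proof -
    have "transpose (P y) $ i $ j = (- P y) $ i $ j" using sk that by simp
    then show ?thesis by (simp add: transpose_def)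
  qed
  have dPx: "(\<lambda>y. P y $ i $ j) differentiable (at x)" for i j
    using smooth_facts(1)[of S "\<lambda>y. P y $ i $ j" x] sm S x by auto
  have dskew: "partial k (\<lambda>y. P y $ j $ i) x = - partial k (\<lambda>y. P y $ i $ j) x" for k i j
  proof -
    have "partial k (\<lambda>y. P y $ j $ i) x = partial k (\<lambda>y. - P y $ i $ j) x"
      apply (rule partial_local[OF S x])
       apply (erule skP)
      by (intro differentiable_minus dPx)
    also have "\<dots> = - partial k (\<lambda>y. P y $ i $ j) x" by (rule partial_uminus[OF dPx])
    finally show ?thesis .
  qed
  have sym: "partial i (partial j F) x = partial j (partial i F) x" if "smooth_on S F" for F i j
    by (rule clairaut[OF S x]) (use smooth_facts[OF that S x] in auto)
  have di: "partial i F differentiable (at x)" if "smooth_on S F" for F i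
    using smooth_facts[OF that S x] by auto
  have br_eq: "pbracket P F Q x = br (\<lambda>l. partial l F x) (\<lambda>i j. P x$i$j) (\<lambda>k. partial k Q x)" for F Q
    by (simp add: pbracket_def grad_def inner_vec_def matrix_vector_mult_def br_def)
  have pp: "partial k (pbracket P G H) x = dbr (\<lambda>i. partial i G x) (\<lambda>k i. partial k (partial i G) x)
     (\<lambda>i. partial i H x) (\<lambda>k j. partial k (partial j H) x) (\<lambda>i j. P x$i$j) (\<lambda>k i j. partial k (\<lambda>y. P y$i$j) x) k"
    if "smooth_on S G" "smooth_on S H" for G H k
    by (rule pb_partial) (use di that dPx in auto)
  have "pbracket P f (pbracket P g h) x + pbracket P g (pbracket P h f) x + pbracket P h (pbracket P f g) x
    = - ((partial 1 f x) * (partial 2 g x * partial 3 h x - partial 3 g x * partial 2 h x)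
         - partial 2 f x * (partial 1 g x * partial 3 h x - partial 3 g x * partial 1 h x)
         + partial 3 f x * (partial 1 g x * partial 2 h x - partial 2 g x * partial 1 h x)) * JcP P x"
    unfolding br_eq pp[OF conjunct1[OF conjunct2[OF fgh]] conjunct2[OF conjunct2[OF fgh]]]
      pp[OF conjunct2[OF conjunct2[OF fgh]] conjunct1[OF fgh]] pp[OF conjunct1[OF fgh] conjunct1[OF conjunct2[OF fgh]]]
      JcP_def
    apply (rule jac_alg)
        apply (rule skP[OF x])
       apply (rule dskew)
    using sym fgh by blast+
  then show "pbracket P f (pbracket P g h) x + pbracket P g (pbracket P h f) x + pbracket P h (pbracket P f g) x = 0"
    using J x by simp
qed


lemma ax: "axis (1::3) (1::real) $ 1 = 1" "axis (1::3) (1::real) $ 2 = 0" "axis (1::3) (1::real) $ 3 = 0"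
  "axis (2::3) (1::real) $ 1 = 0" "axis (2::3) (1::real) $ 2 = 1" "axis (2::3) (1::real) $ 3 = 0"
  "axis (3::3) (1::real) $ 1 = 0" "axis (3::3) (1::real) $ 2 = 0" "axis (3::3) (1::real) $ 3 = 1"
  by (simp_all add: axis_def)

definition S1 :: "real \<Rightarrow> real \<Rightarrow> real \<Rightarrow> real" where "S1 a b c = -1/(sqrt 6*a*b*c)"
definition S2 :: "real \<Rightarrow> real \<Rightarrow> real \<Rightarrow> real" where "S2 a b c = 1/6*(a/(b*c) + 2/a)"
definition TT :: "real \<Rightarrow> real \<Rightarrow> real \<Rightarrow> real" where "TT a b c = 1/2*(1/b - 1/c)"

lemma dS1: assumes "a \<noteq> 0" "b \<noteq> 0" "c \<noteq> 0"
  shows "((\<lambda>t. S1 (a+t*a') (b+t*b') (c+t*c')) has_real_derivative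
     (a'*b*c + a*b'*c + a*b*c')/(sqrt 6*(a*b*c)^2)) (at 0)"
  unfolding S1_def using assms
  by (auto intro!: derivative_eq_intros simp: field_simps power2_eq_square)

lemma dS2: assumes "a \<noteq> 0" "b \<noteq> 0" "c \<noteq> 0"
  shows "((\<lambda>t. S2 (a+t*a') (b+t*b') (c+t*c')) has_real_derivative
     1/6*((a'*b*c - a*(b'*c + b*c'))/(b*c)^2 - 2*a'/a^2)) (at 0)"
  unfolding S2_def using assms
  by (auto intro!: derivative_eq_intros simp: field_simps power2_eq_square)

lemma dTT: assumes "a \<noteq> 0" "b \<noteq> 0" "c \<noteq> 0"
  shows "((\<lambda>t. TT (a+t*a') (b+t*b') (c+t*c')) has_real_derivative
     1/2*(-b'/b^2 + c'/c^2)) (at 0)"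
  unfolding TT_def using assms
  by (auto intro!: derivative_eq_intros simp: field_simps power2_eq_square)


inductive_set Rat :: "(pt \<Rightarrow> real) set" where
  rc: "(\<lambda>x. c) \<in> Rat"
| rv: "(\<lambda>x. x$i) \<in> Rat"
| ri: "i \<noteq> j \<Longrightarrow> (\<lambda>x. inverse (x$i - x$j)) \<in> Rat"
| radd: "F \<in> Rat \<Longrightarrow> G \<in> Rat \<Longrightarrow> (\<lambda>x. F x + G x) \<in> Rat"
| rmul: "F \<in> Rat \<Longrightarrow> G \<in> Rat \<Longrightarrow> (\<lambda>x. F x * G x) \<in> Rat"

lemma omega_ne: "x \<in> Omega \<Longrightarrow> i \<noteq> j \<Longrightarrow> x$i \<noteq> x$j"
  unfolding Omega_def using exhaust_3[of i] exhaust_3[of j] by (elim disjE) auto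

lemma open_Omega: "open Omega"
proof -
  have eq: "Omega = {x. x$1 \<noteq> x$2} \<inter> {x::pt. x$2 \<noteq> x$3} \<inter> {x::pt. x$3 \<noteq> x$1}"
    unfolding Omega_def by auto
  moreover have o: "open {x::pt. x$a \<noteq> x$b}" for a b
    by (rule open_Collect_neq) (auto intro: continuous_intros)
  show ?thesis unfolding eq by (intro open_Int o)
qed

lemma hd_nth: "((\<lambda>x::pt. x$i) has_derivative (\<lambda>v. v$i)) F"
  using bounded_linear.has_derivative[OF bounded_linear_vec_nth[of i] has_derivative_ident[of F]] by simp

lemma rat_diff: "F \<in> Rat \<Longrightarrow> x \<in> Omega \<Longrightarrow> F differentiable (at x)"
proof (induction rule: Rat.induct)
  case (ri i j)
  then have "x$i - x$j \<noteq> 0" using omega_ne by auto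
  moreover have "(\<lambda>x::pt. x$a) differentiable (at x)" for a using hd_nth differentiable_def by blast
  ultimately show ?case by (intro differentiable_inverse differentiable_diff)
next
  case (rv i) then show ?case using hd_nth[of i] differentiable_def by blast
qed auto

lemma partial_add: "F differentiable (at x) \<Longrightarrow> G differentiable (at x) \<Longrightarrow>
   partial k (\<lambda>y. F y + G y) x = partial k F x + partial k G x"
proof -
  assume "F differentiable (at x)" "G differentiable (at x)"
  then obtain D E where D: "(F has_derivative D) (at x)" and E: "(G has_derivative E) (at x)"
    unfolding differentiable_def by blast
  have "((\<lambda>y. F y + G y) has_derivative (\<lambda>v. D v + E v)) (at x)" using D E by (rule has_derivative_add)
  from L2[OF this] L2[OF D] L2[OF E] show ?thesis by simp
qed
  
lemma partial_mult: "F differentiable (at x) \<Longrightarrow> G differentiable (at x) \<Longrightarrow>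
   partial k (\<lambda>y. F y * G y) x = partial k F x * G x + F x * partial k G x"
  unfolding differentiable_def apply clarify
  subgoal for D E using has_derivative_mult[of F D x UNIV G E] L2 by (simp add: algebra_simps)
  done

lemma rat_partial: "F \<in> Rat \<Longrightarrow> \<exists>G\<in>Rat. \<forall>x\<in>Omega. partial k F x = G x"
proof (induction rule: Rat.induct)
  case (rc c)
  have "partial k (\<lambda>x. c) x = 0" for x using L2[OF has_derivative_const] by simp
  then show ?case by (intro bexI[of _ "\<lambda>x. 0"] Rat.rc) auto
next
  case (rv i)
  have "partial k (\<lambda>x. x$i) x = axis k 1 $ i" for x using L2[OF hd_nth[of i "at x"]] by simp
  then show ?case by (intro bexI[of _ "\<lambda>x. axis k 1 $ i"] Rat.rc) auto
next
  case (ri i j)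
  let ?c = "- (axis k 1 $ i - axis k 1 $ j)"
  have "partial k (\<lambda>x. inverse (x$i - x$j)) x = ?c * (inverse (x$i - x$j) * inverse (x$i - x$j))"
    if "x \<in> Omega" for x
  proof -
    have nz: "x$i - x$j \<noteq> 0" using omega_ne that ri by auto
    have hd: "((\<lambda>y::pt. y$i - y$j) has_derivative (\<lambda>v. v$i - v$j)) (at x)"
      by (intro has_derivative_diff hd_nth)
    have "((\<lambda>y::pt. inverse (y$i - y$j)) has_derivative
       (\<lambda>v. - (inverse (x$i - x$j) * (v$i - v$j) * inverse (x$i - x$j)))) (at x)"
      using Deriv.has_derivative_inverse[where f="\<lambda>y::pt. y$i - y$j" and x=x, OF nz hd] by simp
    from L2[OF this] show ?thesis by (simp add: algebra_simps)
  qed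
  moreover have "(\<lambda>x. ?c * (inverse (x$i - x$j) * inverse (x$i - x$j))) \<in> Rat"
    by (intro Rat.rmul Rat.rc Rat.ri ri)
  ultimately show ?case by (intro bexI[of _ "\<lambda>x. ?c * (inverse (x$i - x$j) * inverse (x$i - x$j))"]) simp_all
next
  case (radd F G)
  then obtain F' G' where FG: "F' \<in> Rat" "G' \<in> Rat" "\<forall>x\<in>Omega. partial k F x = F' x" "\<forall>x\<in>Omega. partial k G x = G' x"
    by blast
  have "partial k (\<lambda>x. F x + G x) x = F' x + G' x" if x: "x \<in> Omega" for x
    using partial_add[OF rat_diff[OF radd(1) x] rat_diff[OF radd(2) x], of k] FG x by simp
  moreover have "(\<lambda>x. F' x + G' x) \<in> Rat" using FG by (intro Rat.radd)
  ultimately show ?case by (intro bexI[of _ "\<lambda>x. F' x + G' x"]) simp_all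
next
  case (rmul F G)
  then obtain F' G' where FG: "F' \<in> Rat" "G' \<in> Rat" "\<forall>x\<in>Omega. partial k F x = F' x" "\<forall>x\<in>Omega. partial k G x = G' x"
    by blast
  have "partial k (\<lambda>x. F x * G x) x = F' x * G x + F x * G' x" if x: "x \<in> Omega" for x
    using partial_mult[OF rat_diff[OF rmul(1) x] rat_diff[OF rmul(2) x], of k] FG x by simp
  moreover have "(\<lambda>x. F' x * G x + F x * G' x) \<in> Rat"
    using FG rmul by (intro Rat.radd Rat.rmul)
  ultimately show ?case by (intro bexI[of _ "\<lambda>x. F' x * G x + F x * G' x"]) simp_all
qed

lemma rat_iter: "F \<in> Rat \<Longrightarrow> \<exists>G\<in>Rat. \<forall>x\<in>Omega. iterpartial is F x = G x"
proof (induction "is")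
  case Nil then show ?case by auto
next
  case (Cons i "is")
  then obtain G where G: "G \<in> Rat" "\<forall>x\<in>Omega. iterpartial is F x = G x" by auto
  obtain G' where G': "G' \<in> Rat" "\<forall>x\<in>Omega. partial i G x = G' x" using rat_partial[OF G(1)] by blast
  have "iterpartial (i # is) F x = G' x" if "x \<in> Omega" for x
  proof -
    have "iterpartial (i # is) F x = partial i G x"
      using partial_local[OF open_Omega that, of "iterpartial is F" G i] G rat_diff[OF G(1) that] by simp
    then show ?thesis using G' that by simp
  qed
  then show ?case using G'(1) by blast
qed

lemma rat_smooth: "F \<in> Rat \<Longrightarrow> smooth_on Omega F"
proof -
  assume F: "F \<in> Rat"
  have d: "iterpartial is F differentiable_on Omega" for "is"
  proof -
    obtain G where G: "G \<in> Rat" "\<forall>x\<in>Omega. iterpartial is F x = G x" using rat_iter[OF F] by blast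
    have "iterpartial is F differentiable (at x)" if x: "x \<in> Omega" for x
    proof -
      obtain D where "(G has_derivative D) (at x)" using rat_diff[OF G(1) x] differentiable_def by blast
      then have "(iterpartial is F has_derivative D) (at x)"
        by (rule has_derivative_transform_within_open[OF _ open_Omega x]) (use G in auto)
      then show ?thesis unfolding differentiable_def by blast
    qed
    then show ?thesis using differentiable_at_imp_differentiable_on by blast
  qed
  then show ?thesis unfolding smooth_on_def using differentiable_imp_continuous_on by blast
qed


definition s1 :: "pt \<Rightarrow> real" where "s1 x = S1 (x$1-x$2) (x$2-x$3) (x$3-x$1)"
definition s2 :: "pt \<Rightarrow> real" where "s2 x = S2 (x$1-x$2) (x$2-x$3) (x$3-x$1)"
definition tt :: "pt \<Rightarrow> real" where "tt x = TT (x$1-x$2) (x$2-x$3) (x$3-x$1)"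

definition M1 :: mat3 where "M1 = vector [vector [0,1,-1], vector [-1,0,1], vector [1,-1,0]]"
definition M2 :: mat3 where "M2 = vector [vector [0,2,1], vector [-2,0,-1], vector [-1,1,0]]"
definition M3 :: mat3 where "M3 = vector [vector [0,0,1], vector [0,0,1], vector [-1,-1,0]]"

lemma Pf1_eq: "Pf1 x = s1 x *\<^sub>R M1"
  unfolding Pf1_def s1_def S1_def M1_def Let_def by simp
lemma Pf2_eq: "Pf2 x = s2 x *\<^sub>R M2 + tt x *\<^sub>R M3"
  unfolding Pf2_def s2_def S2_def tt_def TT_def M2_def M3_def Let_def by simp

lemma Q_entry: "(a *\<^sub>R Pf1 x + b *\<^sub>R Pf2 x) $ i $ j = a * s1 x * M1$i$j + b * (s2 x * M2$i$j + tt x * M3$i$j)"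
  unfolding Pf1_eq Pf2_eq by simp

lemma rneg: "F \<in> Rat \<Longrightarrow> (\<lambda>x. c * F x) \<in> Rat"
  by (intro Rat.rmul Rat.rc)

lemma rdiff: "(\<lambda>x. x$i - x$j) \<in> Rat"
proof -
  have "(\<lambda>x. x$i + (-1) * x$j) \<in> Rat" by (intro Rat.radd Rat.rmul Rat.rc Rat.rv)
  then show ?thesis by simp
qed

lemma dv1: "(a::real)/(b*c) = a * (inverse b * inverse c)" by (simp add: divide_inverse inverse_mult_distrib)
lemma dv2: "(2::real)/a = 2 * inverse a" by (simp add: divide_inverse)
lemma dv3: "(1::real)/a = inverse a" by (simp add: divide_inverse)

lemma rsub: "F \<in> Rat \<Longrightarrow> G \<in> Rat \<Longrightarrow> (\<lambda>x. F x - G x) \<in> Rat"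
proof -
  assume "F \<in> Rat" "G \<in> Rat"
  then have "(\<lambda>x. F x + (-1) * G x) \<in> Rat" by (rule Rat.radd[OF _ Rat.rmul[OF Rat.rc]])
  then show ?thesis by simp
qed

lemma s1_rat: "s1 \<in> Rat"
proof -
  have "(\<lambda>x. (-1/sqrt 6) * (inverse (x$1-x$2) * (inverse (x$2-x$3) * inverse (x$3-x$1)))) \<in> Rat"
    by (rule Rat.rmul[OF Rat.rc Rat.rmul[OF Rat.ri Rat.rmul[OF Rat.ri Rat.ri]]]) simp_all
  moreover have "s1 = (\<lambda>x. (-1/sqrt 6) * (inverse (x$1-x$2) * (inverse (x$2-x$3) * inverse (x$3-x$1))))"
    by (auto simp: s1_def S1_def divide_inverse inverse_mult_distrib mult_ac)
  ultimately show ?thesis by simp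
qed

lemma s2_rat: "s2 \<in> Rat"
proof -
  have "(\<lambda>x. (1/6) * ((x$1-x$2) * (inverse (x$2-x$3) * inverse (x$3-x$1)) + 2 * inverse (x$1-x$2))) \<in> Rat"
    by (rule Rat.rmul[OF Rat.rc Rat.radd[OF Rat.rmul[OF rdiff Rat.rmul[OF Rat.ri Rat.ri]] Rat.rmul[OF Rat.rc Rat.ri]]]) simp_all
  moreover have "s2 = (\<lambda>x. (1/6) * ((x$1-x$2) * (inverse (x$2-x$3) * inverse (x$3-x$1)) + 2 * inverse (x$1-x$2)))"
    by (rule ext) (simp only: s2_def S2_def dv1 dv2)
  ultimately show ?thesis by simp
qed

lemma tt_rat: "tt \<in> Rat"
proof -
  have "(\<lambda>x. (1/2) * (inverse (x$2-x$3) - inverse (x$3-x$1))) \<in> Rat"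
    by (rule Rat.rmul[OF Rat.rc rsub[OF Rat.ri Rat.ri]]) simp_all
  moreover have "tt = (\<lambda>x. (1/2) * (inverse (x$2-x$3) - inverse (x$3-x$1)))"
    by (rule ext) (simp only: tt_def TT_def dv3)
  ultimately show ?thesis by simp
qed

lemma Q_rat: "(\<lambda>x. (a *\<^sub>R Pf1 x + b *\<^sub>R Pf2 x) $ i $ j) \<in> Rat"
  unfolding Q_entry
  by (rule Rat.radd[OF Rat.rmul[OF Rat.rmul[OF Rat.rc s1_rat] Rat.rc]
        Rat.rmul[OF Rat.rc Rat.radd[OF Rat.rmul[OF s2_rat Rat.rc] Rat.rmul[OF tt_rat Rat.rc]]]])

lemma om: "x \<in> Omega \<Longrightarrow> x$1 - x$2 \<noteq> 0 \<and> x$2 - x$3 \<noteq> 0 \<and> x$3 - x$1 \<noteq> 0"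
  unfolding Omega_def by auto

lemma shift: "(x + t *\<^sub>R axis k 1) $ i - (x + t *\<^sub>R axis k 1) $ j = (x$i - x$j) + t * (axis k 1 $ i - axis k 1 $ j)"
  by (simp add: algebra_simps)

lemma ps1: "x \<in> Omega \<Longrightarrow> partial k s1 x =
  (let a = x$1-x$2; b = x$2-x$3; c = x$3-x$1; e = axis k (1::real);
       a' = e$1 - e$2; b' = e$2 - e$3; c' = e$3 - e$1 in (a'*b*c + a*b'*c + a*b*c')/(sqrt 6*(a*b*c)^2))"
  unfolding partial_def s1_def shift Let_def
  by (rule DERIV_imp_deriv, rule dS1) (use om in auto)

lemma ps2: "x \<in> Omega \<Longrightarrow> partial k s2 x =
  (let a = x$1-x$2; b = x$2-x$3; c = x$3-x$1; e = axis k (1::real);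
       a' = e$1 - e$2; b' = e$2 - e$3; c' = e$3 - e$1 in 1/6*((a'*b*c - a*(b'*c + b*c'))/(b*c)^2 - 2*a'/a^2))"
  unfolding partial_def s2_def shift Let_def
  by (rule DERIV_imp_deriv, rule dS2) (use om in auto)

lemma ptt: "x \<in> Omega \<Longrightarrow> partial k tt x =
  (let a = x$1-x$2; b = x$2-x$3; c = x$3-x$1; e = axis k (1::real);
       a' = e$1 - e$2; b' = e$2 - e$3; c' = e$3 - e$1 in 1/2*(-b'/b^2 + c'/c^2))"
  unfolding partial_def tt_def shift Let_def
  by (rule DERIV_imp_deriv, rule dTT) (use om in auto)

lemma partial_comb:
  assumes "A differentiable (at x)" "B differentiable (at x)" "C differentiable (at x)"
  shows "partial k (\<lambda>y. a * A y * c1 + b * (B y * c2 + C y * c3)) x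
    = a * partial k A x * c1 + b * (partial k B x * c2 + partial k C x * c3)"
proof -
  obtain DA DB DC where D: "(A has_derivative DA) (at x)" "(B has_derivative DB) (at x)" "(C has_derivative DC) (at x)"
    using assms unfolding differentiable_def by blast
  have "((\<lambda>y. a * A y * c1 + b * (B y * c2 + C y * c3)) has_derivative
     (\<lambda>v. a * DA v * c1 + b * (DB v * c2 + DC v * c3))) (at x)"
    using D by (auto intro!: derivative_eq_intros)
  from L2[OF this] show ?thesis using L2[OF D(1)] L2[OF D(2)] L2[OF D(3)] by simp
qed


lemma J_zero:
  assumes x: "x \<in> Omega"
  shows "JcP (\<lambda>x. a *\<^sub>R Pf1 x + b *\<^sub>R Pf2 x) x = 0"
proof -
  have e: "(\<lambda>y. (a *\<^sub>R Pf1 y + b *\<^sub>R Pf2 y)$i$j) = (\<lambda>y. a * s1 y * M1$i$j + b*(s2 y*M2$i$j + tt y*M3$i$j))" for i j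
    by (rule ext, rule Q_entry)
  have p: "partial k (\<lambda>y. (a *\<^sub>R Pf1 y + b *\<^sub>R Pf2 y)$i$j) x
     = a * partial k s1 x * M1$i$j + b*(partial k s2 x*M2$i$j + partial k tt x*M3$i$j)" for i j k
    unfolding e by (rule partial_comb) (use rat_diff[OF _ x] s1_rat s2_rat tt_rat in auto)
  obtain A B C where pq: "x$1 - x$2 = A" "x$2 - x$3 = B" "x$3 - x$1 = C" by blast
  have ABC: "C = - A - B" using pq by (auto simp: algebra_simps)
  have nz: "A \<noteq> 0" "B \<noteq> 0" "C \<noteq> 0" using om[OF x] pq by auto
  have r: "sqrt 6 \<noteq> 0" by simp
  have J: "JcP (\<lambda>x. a *\<^sub>R Pf1 x + b *\<^sub>R Pf2 x) x = Jc (\<lambda>i j. (a *\<^sub>R Pf1 x + b *\<^sub>R Pf2 x)$i$j)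
     (\<lambda>k i j. a * partial k s1 x * M1$i$j + b*(partial k s2 x*M2$i$j + partial k tt x*M3$i$j))"
    unfolding JcP_def p ..
  have sum0: "partial 3 s1 x = - partial 1 s1 x - partial 2 s1 x"
     "partial 3 s2 x = - partial 1 s2 x - partial 2 s2 x" "partial 3 tt x = - partial 1 tt x - partial 2 tt x"
    unfolding ps1[OF x] ps2[OF x] ptt[OF x] Let_def ax pq using nz r by (simp_all add: divide_simps) (simp_all add: algebra_simps)
  have Jeq: "JcP (\<lambda>x. a *\<^sub>R Pf1 x + b *\<^sub>R Pf2 x) x = -3*a*b*(s1 x*(partial 1 s2 x - partial 2 s2 x + partial 1 tt x + partial 2 tt x)
     - s2 x*(partial 1 s1 x - partial 2 s1 x) - tt x*(partial 1 s1 x + partial 2 s1 x))"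
    unfolding J Jc_def Q_entry M1_def M2_def M3_def
    by (simp add: sum0 algebra_simps)
  have br0: "s1 x*(partial 1 s2 x - partial 2 s2 x + partial 1 tt x + partial 2 tt x)
     - s2 x*(partial 1 s1 x - partial 2 s1 x) - tt x*(partial 1 s1 x + partial 2 s1 x) = 0"
    unfolding ps1[OF x] ps2[OF x] ptt[OF x] Let_def ax s1_def s2_def tt_def S1_def S2_def TT_def pq
    using nz r apply (simp add: divide_simps)
    unfolding ABC by algebra
  show ?thesis using Jeq br0 by simp
qed


lemma dH: "((\<lambda>t. K * (A + t*A') * ((A + t*A')^2 - 9*(B + t*B')^2)) has_real_derivative
   K * (A'*(A^2 - 9*B^2) + A*(2*A*A' - 18*B*B'))) (at 0)"
  by (auto intro!: derivative_eq_intros simp: algebra_simps power2_eq_square)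

lemma shiftH: "(x + t *\<^sub>R axis k 1) $ 1 + (x + t *\<^sub>R axis k 1) $ 2 - 2 * (x + t *\<^sub>R axis k 1) $ 3
   = (x$1 + x$2 - 2 * x$3) + t * (axis k 1 $ 1 + axis k 1 $ 2 - 2 * axis k (1::real) $ 3)"
  by (simp add: algebra_simps)

lemma pH: "partial k Hf x =
  (let A = x$1 + x$2 - 2 * x$3; B = x$1 - x$2; e = axis k (1::real);
       A' = e$1 + e$2 - 2 * e$3; B' = e$1 - e$2 in 1/(6 * sqrt 6) * (A'*(A^2 - 9*B^2) + A*(2*A*A' - 18*B*B')))"
  unfolding partial_def Hf_def Let_def shiftH shift
  by (rule DERIV_imp_deriv, rule dH)

lemma pH1: "partial k H1 x = 1"
proof -
  have "((\<lambda>t. H1 (x + t *\<^sub>R axis k 1)) has_real_derivative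
      (axis k 1 $ 1 + axis k 1 $ 2 + axis k (1::real) $ 3)) (at 0)"
    unfolding H1_def by (auto intro!: derivative_eq_intros)
  moreover have "axis k 1 $ 1 + axis k 1 $ 2 + axis k (1::real) $ 3 = 1"
    using exhaust_3[of k] ax by auto
  ultimately show ?thesis unfolding partial_def using DERIV_imp_deriv by simp
qed

lemma nzs: "x \<in> Omega \<Longrightarrow> x$1 - x$2 \<noteq> 0 \<and> x$2 - x$1 \<noteq> 0 \<and> x$2 - x$3 \<noteq> 0 \<and> x$3 - x$2 \<noteq> 0 \<and> x$1 - x$3 \<noteq> 0 \<and> x$3 - x$1 \<noteq> 0"
  unfolding Omega_def by auto

lemma biham1:
  assumes x: "x \<in> Omega"
  shows "Ufield x = Pf1 x *v grad Hf x"
proof -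
  have r: "sqrt 6 \<noteq> 0" by simp
  have s6: "sqrt 6 * sqrt 6 = (6::real)" by simp
  have s6': "sqrt 6 * (sqrt 6 * y) = (6::real) * y" for y by (simp add: mult.assoc[symmetric])
  show ?thesis
    unfolding vec_eq_iff forall_3
    using nzs[OF x] r apply (simp add: matrix_vector_mult_def sum_3 grad_def Pf1_eq M1_def Ufield_def Let_def
      pH ax s1_def S1_def divide_simps)
    apply (thin_tac "_ \<and> _")
    apply (simp only: mult_ac s6 s6')
    apply (intro conjI)
      apply algebra+
    done
qed

lemma biham2:
  assumes x: "x \<in> Omega"
  shows "Ufield x = Pf2 x *v grad H1 x"
  unfolding vec_eq_iff forall_3
  using nzs[OF x] apply (simp add: matrix_vector_mult_def sum_3 grad_def Pf2_eq M2_def M3_def Ufield_def Let_def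
      pH1 s2_def S2_def tt_def TT_def divide_simps)
  apply (thin_tac "_ \<and> _")
  apply (intro conjI)
    apply algebra+
  done


theorem mainTheorem5:
  shows "poisson_matrix_on Omega Pf1 \<and> poisson_matrix_on Omega Pf2 \<and> compatible_on Omega Pf1 Pf2 \<and>
         (\<forall>x\<in>Omega. Ufield x = Pf1 x *v grad Hf x \<and> Ufield x = Pf2 x *v grad H1 x)"
proof -
  have comp: "poisson_matrix_on Omega (\<lambda>x. a *\<^sub>R Pf1 x + b *\<^sub>R Pf2 x)" for a b
  proof (rule poisson_crit[OF open_Omega])
    show "\<forall>i j. smooth_on Omega (\<lambda>x. (a *\<^sub>R Pf1 x + b *\<^sub>R Pf2 x) $ i $ j)"
      using rat_smooth[OF Q_rat] by blast
    show "\<forall>x\<in>Omega. transpose (a *\<^sub>R Pf1 x + b *\<^sub>R Pf2 x) = - (a *\<^sub>R Pf1 x + b *\<^sub>R Pf2 x)"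
      by (simp add: Pf1_eq Pf2_eq M1_def M2_def M3_def vec_eq_iff forall_3 transpose_def algebra_simps)
    show "\<forall>x\<in>Omega. JcP (\<lambda>x. a *\<^sub>R Pf1 x + b *\<^sub>R Pf2 x) x = 0"
      using J_zero by blast
  qed
  have "poisson_matrix_on Omega Pf1" using comp[of 1 0] by simp
  moreover have "poisson_matrix_on Omega Pf2" using comp[of 0 1] by simp
  moreover have "compatible_on Omega Pf1 Pf2" unfolding compatible_on_def using comp by blast
  ultimately show ?thesis using biham1 biham2 by blast
qed

end
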